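(* Let $\Phi$ be a homogeneous $\Sigma\Pi\Sigma$ circuit over a set of variables $X$ and a field $\mathbb{F}$, with top fan-in $k$, computing a homogeneous polynomial $f$ of degree $d$. Then for any partition $A:X\to Y\cup Z$, $\mathrm{maxrank}(M_{\Phi^A})\le k\cdot 2^d$.
   Context: A $\Sigma\Pi\Sigma$ circuit computes $\sum_{i=1}^k\prod_{j=1}^{\deg(P_i)}l_{i,j}$ (a top plus gate of fan-in $k$ over product gates $P_i$ whose inputs are outputs $l_{i,j}$ of bottom plus gates); it is homogeneous if every $l_{i,j}$ is a homogeneous linear form. $Y,Z$ are disjoint sets of variables and a partition is a map $A:X\to Y\cup Z$; $\Phi^A$ is the circuit obtained by replacing every variable $x$ by $A(x)$, and $M_{\Phi^A}$ is the polynomial coefficient matrix of the polynomial it computes (namely $f^A$). For $g\in\mathbb{F}[Y,Z]$, $M_g$ has rows indexed by monic multilinear monomials $p$ in $Y$ and columns by monic multilinear monomials $q$ in $Z$, with $M_g(p,q)=G$ iff $g=pq\,G+Q$ uniquely with $G$ containing only variables present in $p,q$ and $Q$ having no monomial divisible by $pq$ that contains only variables present in $p,q$. $\mathrm{maxrank}(M_g)=\max_{S:Y\cup Z\to\mathbb{F}}\mathrm{rank}(M_g|_S)$, where $M_g|_S$ evaluates entries at $S$. *)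

theory Defs
  imports Complex_Main "HOL-Library.Poly_Mapping" "HOL-Library.Function_Algebras"
begin

type_synonym ('v,'a) mpoly = "('v \<Rightarrow>\<^sub>0 nat) \<Rightarrow>\<^sub>0 'a"

definition mon_deg :: "('v \<Rightarrow>\<^sub>0 nat) \<Rightarrow> nat" where
  "mon_deg m = (\<Sum>v\<in>Poly_Mapping.keys m. Poly_Mapping.lookup m v)"

definition vars :: "('v,'a::zero) mpoly \<Rightarrow> 'v set" where
  "vars g = (\<Union>m\<in>Poly_Mapping.keys g. Poly_Mapping.keys m)"

definition homogeneous :: "nat \<Rightarrow> ('v,'a::zero) mpoly \<Rightarrow> bool" where
  "homogeneous d g \<longleftrightarrow> (\<forall>m\<in>Poly_Mapping.keys g. mon_deg m = d)"

definition hom_linear_form :: "'x set \<Rightarrow> ('x,'a::zero) mpoly \<Rightarrow> bool" where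
  "hom_linear_form X l \<longleftrightarrow> homogeneous 1 l \<and> vars l \<subseteq> X"

text \<open>A Sigma-Pi-Sigma circuit: a list (top plus gate, fan-in = length) of product gates,
  each a list of bottom linear forms. Its computed polynomial:\<close>
definition circuit_poly :: "('x,'a::comm_ring_1) mpoly list list \<Rightarrow> ('x,'a) mpoly" where
  "circuit_poly \<Phi> = sum_list (map prod_list \<Phi>)"

definition homogeneous_SPS :: "'x set \<Rightarrow> ('x,'a::comm_ring_1) mpoly list list \<Rightarrow> bool" where
  "homogeneous_SPS X \<Phi> \<longleftrightarrow> (\<forall>P\<in>set \<Phi>. \<forall>l\<in>set P. hom_linear_form X l)"

definition rename_mon :: "('x \<Rightarrow> 'v) \<Rightarrow> ('x \<Rightarrow>\<^sub>0 nat) \<Rightarrow> ('v \<Rightarrow>\<^sub>0 nat)" where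
  "rename_mon A m = (\<Sum>x\<in>Poly_Mapping.keys m. Poly_Mapping.single (A x) (Poly_Mapping.lookup m x))"

definition rename_poly :: "('x \<Rightarrow> 'v) \<Rightarrow> ('x,'a::comm_monoid_add) mpoly \<Rightarrow> ('v,'a) mpoly" where
  "rename_poly A p = (\<Sum>m\<in>Poly_Mapping.keys p. Poly_Mapping.single (rename_mon A m) (Poly_Mapping.lookup p m))"

definition circuit_subst :: "('x \<Rightarrow> 'v) \<Rightarrow> ('x,'a::comm_ring_1) mpoly list list \<Rightarrow> ('v,'a) mpoly list list" where
  "circuit_subst A \<Phi> = map (map (rename_poly A)) \<Phi>"

definition ml_mon :: "'v set \<Rightarrow> ('v \<Rightarrow>\<^sub>0 nat)" where
  "ml_mon P = (\<Sum>v\<in>P. Poly_Mapping.single v 1)"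

definition mon_divides :: "('v \<Rightarrow>\<^sub>0 nat) \<Rightarrow> ('v \<Rightarrow>\<^sub>0 nat) \<Rightarrow> bool" where
  "mon_divides a b \<longleftrightarrow> (\<forall>v. Poly_Mapping.lookup a v \<le> Poly_Mapping.lookup b v)"

text \<open>Entry M_g(p,q) with p = ml_mon P, q = ml_mon Q: the unique G with
  g = p q G + R, vars G \<subseteq> P \<union> Q, and no monomial of R both divisible by p q and
  containing only variables of P \<union> Q.\<close>
definition coeff_entry :: "('v,'a::comm_ring_1) mpoly \<Rightarrow> 'v set \<Rightarrow> 'v set \<Rightarrow> ('v,'a) mpoly" where
  "coeff_entry g P Q = (THE G. vars G \<subseteq> P \<union> Q \<and>
     (\<exists>R. g = Poly_Mapping.single (ml_mon P + ml_mon Q) 1 * G + R \<and>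
        (\<forall>m\<in>Poly_Mapping.keys R. \<not> (mon_divides (ml_mon P + ml_mon Q) m \<and> Poly_Mapping.keys m \<subseteq> P \<union> Q))))"

definition eval_poly :: "('v \<Rightarrow> 'a::comm_ring_1) \<Rightarrow> ('v,'a) mpoly \<Rightarrow> 'a" where
  "eval_poly S G = (\<Sum>m\<in>Poly_Mapping.keys G. Poly_Mapping.lookup G m * (\<Prod>v\<in>Poly_Mapping.keys m. S v ^ Poly_Mapping.lookup m v))"

text \<open>Rows of M_g|_S, indexed by finite subsets P \<subseteq> Y (monic multilinear monomials in Y);
  each row is the function on column indices (finite Q \<subseteq> Z), zero elsewhere.\<close>
definition eval_row :: "'v set \<Rightarrow> ('v,'a::comm_ring_1) mpoly \<Rightarrow> ('v \<Rightarrow> 'a) \<Rightarrow> 'v set \<Rightarrow> ('v set \<Rightarrow> 'a)" where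
  "eval_row Z g S P = (\<lambda>Q. if finite Q \<and> Q \<subseteq> Z then eval_poly S (coeff_entry g P Q) else 0)"

definition rank_eval :: "'v set \<Rightarrow> 'v set \<Rightarrow> ('v,'a::field) mpoly \<Rightarrow> ('v \<Rightarrow> 'a) \<Rightarrow> nat" where
  "rank_eval Y Z g S = vector_space.dim (\<lambda>c f x. c * f x)
      (eval_row Z g S ` {P. finite P \<and> P \<subseteq> Y})"

definition maxrank :: "'v set \<Rightarrow> 'v set \<Rightarrow> ('v,'a::field) mpoly \<Rightarrow> nat" where
  "maxrank Y Z g = (SUP S. rank_eval Y Z g S)"

end

theory Submission
  imports Defs
begin


abbreviation lk where "lk \<equiv> Poly_Mapping.lookup"
abbreviation ks where "ks \<equiv> Poly_Mapping.keys"
abbreviation sg where "sg \<equiv> Poly_Mapping.single"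

lemma lk_single: "lk (sg k v) k' = (if k = k' then v else 0)"
  by (simp add: Poly_Mapping.lookup_single when_def)

lemma expand_sup:
  fixes p :: "'a \<Rightarrow>\<^sub>0 'b::comm_monoid_add"
  assumes "finite K" "ks p \<subseteq> K"
  shows "(\<Sum>a\<in>K. sg a (lk p a)) = p"
proof (rule poly_mapping_eqI)
  fix k
  have "lk (\<Sum>a\<in>K. sg a (lk p a)) k = (\<Sum>a\<in>K. if a = k then lk p a else 0)"
    by (simp add: Poly_Mapping.lookup_sum lk_single)
  also have "\<dots> = (if k \<in> K then lk p k else 0)"
    using assms(1) by (simp add: sum.delta')
  also have "\<dots> = lk p k" using assms(2) by (auto simp: in_keys_iff)
  finally show "lk (\<Sum>a\<in>K. sg a (lk p a)) k = lk p k" .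
qed

lemma expand: "(\<Sum>a\<in>ks p. sg a (lk p a)) = (p :: 'a \<Rightarrow>\<^sub>0 'b::comm_monoid_add)"
  by (rule expand_sup) auto

definition addh :: "(('a \<Rightarrow>\<^sub>0 'b::comm_monoid_add) \<Rightarrow> 'c::comm_monoid_add) \<Rightarrow> bool" where
  "addh \<phi> \<longleftrightarrow> (\<forall>p q. \<phi> (p + q) = \<phi> p + \<phi> q) \<and> \<phi> 0 = 0"

lemma addh_sum: "addh \<phi> \<Longrightarrow> \<phi> (sum f A) = (\<Sum>x\<in>A. \<phi> (f x))"
  by (induction A rule: infinite_finite_induct) (auto simp: addh_def)

lemma addh_sum_list: "addh \<phi> \<Longrightarrow> \<phi> (sum_list xs) = sum_list (map \<phi> xs)"
  by (induction xs) (auto simp: addh_def)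

lemma bilin:
  fixes \<phi> \<psi>1 \<psi>2 :: "('a::monoid_add \<Rightarrow>\<^sub>0 'b::comm_semiring_0) \<Rightarrow> 'c::comm_semiring_0"
  assumes "addh \<phi>" "addh \<psi>1" "addh \<psi>2"
    and "\<And>a b. a \<in> ks p \<Longrightarrow> b \<in> ks q \<Longrightarrow>
      \<phi> (sg a (lk p a) * sg b (lk q b)) = \<psi>1 (sg a (lk p a)) * \<psi>2 (sg b (lk q b))"
  shows "\<phi> (p * q) = \<psi>1 p * \<psi>2 q"
proof -
  have "p * q = (\<Sum>a\<in>ks p. sg a (lk p a)) * (\<Sum>b\<in>ks q. sg b (lk q b))"
    by (simp add: expand)
  also have "\<dots> = (\<Sum>a\<in>ks p. \<Sum>b\<in>ks q. sg a (lk p a) * sg b (lk q b))"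
    by (simp add: sum_product)
  finally have "\<phi> (p * q) = (\<Sum>a\<in>ks p. \<Sum>b\<in>ks q. \<phi> (sg a (lk p a) * sg b (lk q b)))"
    using assms(1) by (simp add: addh_sum)
  also have "\<dots> = (\<Sum>a\<in>ks p. \<Sum>b\<in>ks q. \<psi>1 (sg a (lk p a)) * \<psi>2 (sg b (lk q b)))"
    using assms(4) by simp
  also have "\<dots> = (\<Sum>a\<in>ks p. \<psi>1 (sg a (lk p a))) * (\<Sum>b\<in>ks q. \<psi>2 (sg b (lk q b)))"
    by (simp add: sum_product)
  also have "\<dots> = \<psi>1 (\<Sum>a\<in>ks p. sg a (lk p a)) * \<psi>2 (\<Sum>b\<in>ks q. sg b (lk q b))"
    by (simp only: addh_sum[OF assms(2)] addh_sum[OF assms(3)])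
  also have "\<dots> = \<psi>1 p * \<psi>2 q" by (simp add: expand)
  finally show ?thesis .
qed

lemma sum_sup:
  fixes g :: "'a \<Rightarrow> 'b::zero \<Rightarrow> 'c::comm_monoid_add"
  assumes "finite K" "ks m \<subseteq> K" "\<And>x. g x 0 = 0"
  shows "(\<Sum>x\<in>ks m. g x (lk m x)) = (\<Sum>x\<in>K. g x (lk m x))"
  using assms by (intro sum.mono_neutral_left) (auto simp: in_keys_iff)

lemma rename_mon_sup: "finite K \<Longrightarrow> ks m \<subseteq> K \<Longrightarrow>
   rename_mon A m = (\<Sum>x\<in>K. sg (A x) (lk m x))"
  unfolding rename_mon_def by (rule sum_sup) auto

lemma rename_mon_add: "rename_mon A (m1 + m2) = rename_mon A m1 + rename_mon A m2"
proof -
  let ?K = "ks m1 \<union> ks m2"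
  have f: "finite ?K" by simp
  have "ks (m1 + m2) \<subseteq> ?K" by (rule Poly_Mapping.keys_add)
  then show ?thesis
    using rename_mon_sup[OF f, of m1 A] rename_mon_sup[OF f, of m2 A] rename_mon_sup[OF f, of "m1+m2" A]
    by (simp add: Poly_Mapping.lookup_add Poly_Mapping.single_add sum.distrib)
qed

lemma rename_mon_zero[simp]: "rename_mon A 0 = 0"
  by (simp add: rename_mon_def)

lemma rename_mon_single: "rename_mon A (sg x n) = sg (A x) n"
  by (simp add: rename_mon_def)

lemma rename_poly_sup: "finite K \<Longrightarrow> ks p \<subseteq> K \<Longrightarrow>
   rename_poly A p = (\<Sum>m\<in>K. sg (rename_mon A m) (lk p m))"
  unfolding rename_poly_def by (rule sum_sup) auto

lemma addh_rename: "addh (rename_poly A)"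
proof -
  have "rename_poly A (p + q) = rename_poly A p + rename_poly A q" for p q :: "('a,'b) mpoly"
  proof -
    let ?K = "ks p \<union> ks q"
    have f: "finite ?K" by simp
    have "ks (p + q) \<subseteq> ?K" by (rule Poly_Mapping.keys_add)
    then show ?thesis
      using rename_poly_sup[OF f, of p A] rename_poly_sup[OF f, of q A] rename_poly_sup[OF f, of "p+q" A]
      by (simp add: Poly_Mapping.lookup_add Poly_Mapping.single_add sum.distrib)
  qed
  then show ?thesis by (simp add: addh_def rename_poly_def)
qed

lemma rename_poly_single: "rename_poly A (sg m c) = sg (rename_mon A m) c"
  by (simp add: rename_poly_def)

lemma rename_mult: fixes p q :: "('x,'b::comm_ring_1) mpoly"
  shows "rename_poly A (p * q) = rename_poly A p * rename_poly A q"
  by (rule bilin[OF addh_rename addh_rename addh_rename])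
     (simp add: Poly_Mapping.mult_single rename_poly_single rename_mon_add)

lemma rename_one: "rename_poly A (1::('x,'b::comm_ring_1) mpoly) = 1"
proof -
  have "(1::('a,'b) mpoly) = sg 0 1" by simp
  then show ?thesis by (metis rename_poly_single rename_mon_zero Poly_Mapping.single_one)
qed

lemma rename_prod_list: fixes xs :: "('x,'b::comm_ring_1) mpoly list" shows "rename_poly A (prod_list xs) = prod_list (map (rename_poly A) xs)"
  by (induction xs) (simp_all add: rename_one rename_mult)

lemma circuit_rename: "circuit_poly (circuit_subst A \<Phi>) = rename_poly A (circuit_poly \<Phi>)"
  unfolding circuit_poly_def circuit_subst_def
  by (simp add: addh_sum_list[OF addh_rename] rename_prod_list o_def)


lemma mon_deg_sup: "finite K \<Longrightarrow> ks m \<subseteq> K \<Longrightarrow> mon_deg m = (\<Sum>v\<in>K. lk m v)"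
  unfolding mon_deg_def by (rule sum_sup) auto

lemma mon_deg_add: "mon_deg (a + b) = mon_deg a + mon_deg b"
proof -
  let ?K = "ks a \<union> ks b"
  have f: "finite ?K" by simp
  have "ks (a + b) \<subseteq> ?K" by (rule Poly_Mapping.keys_add)
  then show ?thesis
    using mon_deg_sup[OF f, of a] mon_deg_sup[OF f, of b] mon_deg_sup[OF f, of "a+b"]
    by (simp add: Poly_Mapping.lookup_add sum.distrib)
qed

lemma mon_deg_zero[simp]: "mon_deg 0 = 0" by (simp add: mon_deg_def)

lemma addh_mon_deg: "addh mon_deg"
  by (simp add: addh_def mon_deg_add)

lemma mon_deg_single[simp]: "mon_deg (sg v n) = n"
  by (simp add: mon_deg_def)

lemma mon_deg_rename: "mon_deg (rename_mon A m) = mon_deg m"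
proof -
  have "mon_deg (rename_mon A m) = (\<Sum>x\<in>ks m. mon_deg (sg (A x) (lk m x)))"
    unfolding rename_mon_def by (rule addh_sum[OF addh_mon_deg])
  also have "\<dots> = (\<Sum>x\<in>ks m. lk m x)" by simp
  finally show ?thesis by (simp add: mon_deg_def[of m])
qed

lemma hom_mult:
  fixes a b :: "('v,'a::comm_ring_1) mpoly"
  assumes "homogeneous e a" "homogeneous e' b"
  shows "homogeneous (e + e') (a * b)"
  unfolding homogeneous_def
proof
  fix m assume "m \<in> ks (a * b)"
  then obtain \<alpha> \<beta> where "\<alpha> \<in> ks a" "\<beta> \<in> ks b" "m = \<alpha> + \<beta>"
    using Poly_Mapping.keys_mult by blast
  then show "mon_deg m = e + e'"
    using assms by (simp add: homogeneous_def mon_deg_add)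
qed

lemma hom_one: "homogeneous 0 (1::('v,'a::comm_ring_1) mpoly)"
  by (simp add: homogeneous_def)

lemma hom_prod_list:
  fixes L :: "('v,'a::comm_ring_1) mpoly list"
  shows "\<forall>l\<in>set L. homogeneous 1 l \<Longrightarrow> homogeneous (length L) (prod_list L)"
  by (induction L) (auto simp: hom_one dest: hom_mult)

lemma keys_rename: "ks (rename_poly A f) \<subseteq> rename_mon A ` ks f"
proof -
  have "ks (rename_poly A f) \<subseteq> (\<Union>m\<in>ks f. ks (sg (rename_mon A m) (lk f m)))"
    unfolding rename_poly_def by (rule Poly_Mapping.keys_sum)
  also have "\<dots> \<subseteq> rename_mon A ` ks f" by auto
  finally show ?thesis .
qed

lemma hom_rename: "homogeneous d f \<Longrightarrow> homogeneous d (rename_poly A f)"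
  using keys_rename[of A f] by (auto simp: homogeneous_def mon_deg_rename)

definition Hd :: "nat \<Rightarrow> ('v,'a::zero) mpoly \<Rightarrow> ('v,'a) mpoly" where
  "Hd d g = Abs_poly_mapping (\<lambda>m. if mon_deg m = d then lk g m else 0)"

lemma lk_Hd: "lk (Hd d g) m = (if mon_deg m = d then lk g m else 0)"
proof -
  have "finite {m. (if mon_deg m = d then lk g m else 0) \<noteq> 0}"
    by (rule finite_subset[of _ "ks g"]) (auto simp: in_keys_iff)
  then show ?thesis unfolding Hd_def by simp
qed

lemma addh_Hd: "addh (Hd d :: ('v,'a::comm_monoid_add) mpoly \<Rightarrow> _)"
  unfolding addh_def
  by (auto intro!: poly_mapping_eqI simp: lk_Hd Poly_Mapping.lookup_add)

lemma Hd_hom: "homogeneous d g \<Longrightarrow> Hd d g = g"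
  by (rule poly_mapping_eqI) (auto simp: lk_Hd homogeneous_def in_keys_iff)

lemma Hd_other: "homogeneous e g \<Longrightarrow> e \<noteq> d \<Longrightarrow> Hd d g = 0"
  by (rule poly_mapping_eqI) (auto simp: lk_Hd homogeneous_def in_keys_iff)

lemma deg1_single:
  assumes "mon_deg m = 1"
  shows "\<exists>x. m = sg x 1 \<and> ks m = {x}"
proof -
  have nz: "ks m \<noteq> {}" using assms by (auto simp: mon_deg_def)
  then obtain x where x: "x \<in> ks m" by blast
  have "mon_deg m = lk m x + (\<Sum>v\<in>ks m - {x}. lk m v)"
    unfolding mon_deg_def using x by (simp add: sum.remove)
  moreover have "lk m x \<ge> 1" using x by (simp add: in_keys_iff)
  ultimately have a: "lk m x = 1" and b: "(\<Sum>v\<in>ks m - {x}. lk m v) = 0" using assms by auto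
  from b have "ks m - {x} = {}" by (auto simp: in_keys_iff)
  then have k: "ks m = {x}" using x by auto
  have "m = sg x 1"
    by (rule poly_mapping_eqI) (metis a k lk_single in_keys_iff singletonI singletonD)
  with k show ?thesis by blast
qed

lemma lin_keys:
  assumes "hom_linear_form X l" "m \<in> ks l"
  shows "\<exists>x\<in>X. m = sg x 1"
proof -
  have "mon_deg m = 1" using assms by (auto simp: hom_linear_form_def homogeneous_def)
  then obtain x where "m = sg x 1" "ks m = {x}" using deg1_single by blast
  moreover have "ks m \<subseteq> X" using assms by (auto simp: hom_linear_form_def vars_def)
  ultimately show ?thesis by auto
qed

lemma lin_rename_keys:
  assumes "hom_linear_form X l" "\<forall>x\<in>X. A x \<in> W"
  shows "ks (rename_poly A l) \<subseteq> {sg v 1 | v. v \<in> W}"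
proof
  fix m assume "m \<in> ks (rename_poly A l)"
  then obtain m0 where "m0 \<in> ks l" "m = rename_mon A m0" using keys_rename by blast
  then show "m \<in> {sg v 1 | v. v \<in> W}"
    using lin_keys[OF assms(1)] assms(2) by (force simp: rename_mon_single)
qed

lemma vars_mult: "vars (a * b) \<subseteq> vars a \<union> vars (b::('v,'a::comm_ring_1) mpoly)"
proof
  fix v assume "v \<in> vars (a * b)"
  then obtain m where m: "m \<in> ks (a*b)" "v \<in> ks m" by (auto simp: vars_def)
  then obtain \<alpha> \<beta> where "\<alpha> \<in> ks a" "\<beta> \<in> ks b" "m = \<alpha> + \<beta>"
    using Poly_Mapping.keys_mult by blast
  then show "v \<in> vars a \<union> vars b"
    using m(2) Poly_Mapping.keys_add[of \<alpha> \<beta>] by (auto simp: vars_def)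
qed

lemma vars_one[simp]: "vars (1::('v,'a::comm_ring_1) mpoly) = {}"
  by (simp add: vars_def)

lemma split_YZ:
  fixes p :: "('v,'a::comm_ring_1) mpoly"
  assumes "ks p \<subseteq> {sg v 1 | v. v \<in> Y \<union> Z}"
  shows "\<exists>pY pZ. p = pY + pZ \<and> vars pY \<subseteq> Y \<and> vars pZ \<subseteq> Z"
proof -
  define pY where "pY = (\<Sum>m\<in>ks p. if ks m \<subseteq> Y then sg m (lk p m) else 0)"
  define pZ where "pZ = (\<Sum>m\<in>ks p. if ks m \<subseteq> Y then 0 else sg m (lk p m))"
  have "pY + pZ = (\<Sum>m\<in>ks p. sg m (lk p m))"
    unfolding pY_def pZ_def sum.distrib[symmetric] by (rule sum.cong) auto
  then have e: "p = pY + pZ" by (simp add: expand)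
  have kY: "ks pY \<subseteq> {m \<in> ks p. ks m \<subseteq> Y}"
  proof -
    have "ks pY \<subseteq> (\<Union>m\<in>ks p. ks (if ks m \<subseteq> Y then sg m (lk p m) else 0))"
      unfolding pY_def by (rule Poly_Mapping.keys_sum)
    also have "\<dots> \<subseteq> {m \<in> ks p. ks m \<subseteq> Y}" by (auto split: if_splits)
    finally show ?thesis .
  qed
  have kZ: "ks pZ \<subseteq> {m \<in> ks p. \<not> ks m \<subseteq> Y}"
  proof -
    have "ks pZ \<subseteq> (\<Union>m\<in>ks p. ks (if ks m \<subseteq> Y then 0 else sg m (lk p m)))"
      unfolding pZ_def by (rule Poly_Mapping.keys_sum)
    also have "\<dots> \<subseteq> {m \<in> ks p. \<not> ks m \<subseteq> Y}" by (auto split: if_splits)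
    finally show ?thesis .
  qed
  have "vars pY \<subseteq> Y" using kY by (auto simp: vars_def)
  moreover have "vars pZ \<subseteq> Z"
  proof
    fix v assume "v \<in> vars pZ"
    then obtain m where "m \<in> ks pZ" "v \<in> ks m" by (auto simp: vars_def)
    with kZ assms show "v \<in> Z" by (force split: if_splits)
  qed
  ultimately show ?thesis using e by blast
qed

lemma sl1: "sum_list (map (\<lambda>(a,b). a*b) (map (\<lambda>(a,b). (c*a, b)) ps)) = (c::'a::comm_ring_1) * sum_list (map (\<lambda>(a,b). a*b) ps)"
  by (induction ps) (auto simp: algebra_simps)

lemma sl2: "sum_list (map (\<lambda>(a,b). a*b) (map (\<lambda>(a,b). (a, c*b)) ps)) = (c::'a::comm_ring_1) * sum_list (map (\<lambda>(a,b). a*b) ps)"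
  by (induction ps) (auto simp: algebra_simps)

lemma expand_prod:
  fixes L :: "('v,'a::comm_ring_1) mpoly list"
  assumes "\<forall>l\<in>set L. \<exists>lY lZ. l = lY + lZ \<and> vars lY \<subseteq> Y \<and> vars lZ \<subseteq> Z"
  shows "\<exists>ps. length ps = 2 ^ length L \<and> (\<forall>(a,b)\<in>set ps. vars a \<subseteq> Y \<and> vars b \<subseteq> Z)
     \<and> prod_list L = sum_list (map (\<lambda>(a,b). a*b) ps)"
  using assms
proof (induction L)
  case Nil
  show ?case by (rule exI[of _ "[(1,1)]"]) simp
next
  case (Cons l L)
  then obtain ps where ps: "length ps = 2 ^ length L" "\<forall>(a,b)\<in>set ps. vars a \<subseteq> Y \<and> vars b \<subseteq> Z"
     "prod_list L = sum_list (map (\<lambda>(a,b). a*b) ps)" by auto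
  obtain lY lZ where l: "l = lY + lZ" "vars lY \<subseteq> Y" "vars lZ \<subseteq> Z" using Cons.prems by auto
  let ?ps = "map (\<lambda>(a,b). (lY*a, b)) ps @ map (\<lambda>(a,b). (a, lZ*b)) ps"
  have "length ?ps = 2 ^ length (l # L)" using ps(1) by simp
  moreover have "\<forall>(a,b)\<in>set ?ps. vars a \<subseteq> Y \<and> vars b \<subseteq> Z"
    using ps(2) l(2,3) vars_mult by fastforce
  moreover have "sum_list (map (\<lambda>(a,b). a*b) ?ps) = lY * sum_list (map (\<lambda>(a,b). a*b) ps) + lZ * sum_list (map (\<lambda>(a,b). a*b) ps)"
    by (simp only: map_append sum_list_append sl1 sl2)
  then have "prod_list (l # L) = sum_list (map (\<lambda>(a,b). a*b) ?ps)"
    using ps(3) l(1) by (simp add: distrib_right)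
  ultimately show ?case by blast
qed



lemma lk_ml_mon: "finite P \<Longrightarrow> lk (ml_mon P) v = (if v \<in> P then 1 else 0)"
  by (simp add: ml_mon_def Poly_Mapping.lookup_sum lk_single)

lemma ks_ml_mon: "finite P \<Longrightarrow> ks (ml_mon P) = P"
  by (rule set_eqI) (simp add: in_keys_iff lk_ml_mon)

lemma ml_mon_empty[simp]: "ml_mon {} = 0"
  by (simp add: ml_mon_def)

lemma ks_add_nat: "ks (a + b :: 'v \<Rightarrow>\<^sub>0 nat) = ks a \<union> ks b"
  by (auto simp: in_keys_iff Poly_Mapping.lookup_add)

lemma add_diff_nat_pm: "(c + n) - c = (n :: 'v \<Rightarrow>\<^sub>0 nat)"
  by simp

lemma div_add_diff: "mon_divides a m \<Longrightarrow> a + (m - a) = (m :: 'v \<Rightarrow>\<^sub>0 nat)"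
  by (rule poly_mapping_eqI) (simp add: mon_divides_def Poly_Mapping.lookup_add Poly_Mapping.lookup_minus)

lemma add_eq_iff_div: "(a + n = (m :: 'v \<Rightarrow>\<^sub>0 nat)) \<longleftrightarrow> mon_divides a m \<and> n = m - a"
proof
  assume h: "a + n = m"
  then have "mon_divides a m" by (auto simp: mon_divides_def Poly_Mapping.lookup_add)
  moreover have "n = m - a" using h by auto
  ultimately show "mon_divides a m \<and> n = m - a" by blast
next
  assume "mon_divides a m \<and> n = m - a"
  then show "a + n = m" using div_add_diff by blast
qed

lemma ks_diff_nat: "ks (m - a :: 'v \<Rightarrow>\<^sub>0 nat) \<subseteq> ks m"
  by (auto simp: in_keys_iff Poly_Mapping.lookup_minus)

lemma lk_single_mult:
  fixes G :: "('v,'a::comm_ring_1) mpoly"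
  shows "lk (sg a 1 * G) m = (if mon_divides a m then lk G (m - a) else 0)"
proof -
  have "sg a 1 * G = (\<Sum>n\<in>ks G. sg (a + n) (lk G n))"
    by (subst (1) expand[of G, symmetric]) (simp add: sum_distrib_left Poly_Mapping.mult_single)
  then have "lk (sg a 1 * G) m = (\<Sum>n\<in>ks G. if a + n = m then lk G n else 0)"
    by (simp add: Poly_Mapping.lookup_sum lk_single)
  also have "\<dots> = (\<Sum>n\<in>ks G. if mon_divides a m \<and> n = m - a then lk G n else 0)"
    by (simp only: add_eq_iff_div)
  also have "\<dots> = (if mon_divides a m then lk G (m - a) else 0)"
    by (cases "mon_divides a m") (auto simp: in_keys_iff)
  finally show ?thesis .
qed

definition CE :: "('v,'a::comm_ring_1) mpoly \<Rightarrow> 'v set \<Rightarrow> 'v set \<Rightarrow> ('v,'a) mpoly" where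
  "CE g P Q = Abs_poly_mapping (\<lambda>n. if ks n \<subseteq> P \<union> Q then lk g (ml_mon P + ml_mon Q + n) else 0)"

lemma lk_CE: "lk (CE g P Q) n = (if ks n \<subseteq> P \<union> Q then lk g (ml_mon P + ml_mon Q + n) else 0)"
proof -
  let ?c = "ml_mon P + ml_mon Q"
  have "{n. (if ks n \<subseteq> P \<union> Q then lk g (?c + n) else 0) \<noteq> 0} \<subseteq> (\<lambda>m. m - ?c) ` ks g"
  proof
    fix n assume "n \<in> {n. (if ks n \<subseteq> P \<union> Q then lk g (?c + n) else 0) \<noteq> 0}"
    then have "?c + n \<in> ks g" by (auto simp: in_keys_iff split: if_splits)
    moreover have "n = (?c + n) - ?c" by simp
    ultimately show "n \<in> (\<lambda>m. m - ?c) ` ks g" by blast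
  qed
  then have "finite {n. (if ks n \<subseteq> P \<union> Q then lk g (?c + n) else 0) \<noteq> 0}"
    by (rule finite_subset) simp
  then show ?thesis unfolding CE_def by simp
qed

lemma coeff_entry_CE:
  assumes "finite P" "finite Q"
  shows "coeff_entry g P Q = CE g P Q"
proof -
  let ?c = "ml_mon P + ml_mon Q"
  let ?U = "P \<union> Q"
  have kc: "ks ?c = ?U" using assms by (simp add: ks_add_nat ks_ml_mon)
  show ?thesis unfolding coeff_entry_def
  proof (rule the_equality)
    show "vars (CE g P Q) \<subseteq> ?U \<and> (\<exists>R. g = sg ?c 1 * CE g P Q + R \<and>
        (\<forall>m\<in>ks R. \<not> (mon_divides ?c m \<and> ks m \<subseteq> ?U)))"
    proof (intro conjI exI[of _ "g - sg ?c 1 * CE g P Q"] ballI)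
      have "ks n \<subseteq> ?U" if "n \<in> ks (CE g P Q)" for n
      proof -
        have "lk (CE g P Q) n \<noteq> 0" using that by (simp add: in_keys_iff)
        then show ?thesis unfolding lk_CE by (auto split: if_splits)
      qed
      then show "vars (CE g P Q) \<subseteq> ?U" unfolding vars_def by blast
      show "g = sg ?c 1 * CE g P Q + (g - sg ?c 1 * CE g P Q)" by simp
      fix m assume m: "m \<in> ks (g - sg ?c 1 * CE g P Q)"
      show "\<not> (mon_divides ?c m \<and> ks m \<subseteq> ?U)"
      proof
        assume h: "mon_divides ?c m \<and> ks m \<subseteq> ?U"
        have "ks (m - ?c) \<subseteq> ks m" by (rule ks_diff_nat)
        with h have ksub: "ks (m - ?c) \<subseteq> ?U" by blast
        have e1: "?c + (m - ?c) = m" using h div_add_diff by blast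
        have "lk (sg ?c 1 * CE g P Q) m = lk (CE g P Q) (m - ?c)"
          using h by (simp only: lk_single_mult if_True)
        also have "\<dots> = lk g (?c + (m - ?c))"
          using ksub by (simp only: lk_CE if_True)
        also have "\<dots> = lk g m" using e1 by (simp only:)
        finally have "lk (sg ?c 1 * CE g P Q) m = lk g m" .
        then have "lk (g - sg ?c 1 * CE g P Q) m = 0" by (simp add: Poly_Mapping.lookup_minus)
        with m show False by (simp add: in_keys_iff)
      qed
    qed
  next
    fix G assume "vars G \<subseteq> ?U \<and> (\<exists>R. g = sg ?c 1 * G + R \<and>
        (\<forall>m\<in>ks R. \<not> (mon_divides ?c m \<and> ks m \<subseteq> ?U)))"
    then obtain R where G: "vars G \<subseteq> ?U" "g = sg ?c 1 * G + R"
      "\<forall>m\<in>ks R. \<not> (mon_divides ?c m \<and> ks m \<subseteq> ?U)" by blast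
    show "G = CE g P Q"
    proof (rule poly_mapping_eqI)
      fix n
      show "lk G n = lk (CE g P Q) n"
      proof (cases "ks n \<subseteq> ?U")
        case True
        let ?m = "?c + n"
        have d: "mon_divides ?c ?m" by (simp add: mon_divides_def Poly_Mapping.lookup_add)
        have "ks ?m \<subseteq> ?U" using True kc by (simp add: ks_add_nat)
        then have "lk R ?m = 0" using G(3) d by (auto simp: in_keys_iff)
        then have "lk g ?m = lk G n" using G(2) d
          by (simp add: Poly_Mapping.lookup_add lk_single_mult)
        then show ?thesis using True by (simp add: lk_CE)
      next
        case False
        then have "n \<notin> ks G" using G(1) by (auto simp: vars_def)
        then show ?thesis using False by (simp add: lk_CE in_keys_iff)
      qed
    qed
  qed
qed

lemma addh_CE: "addh (\<lambda>g. CE g P Q)"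
  unfolding addh_def
  by (auto intro!: poly_mapping_eqI simp: lk_CE Poly_Mapping.lookup_add)

lemma CE_single:
  assumes "finite P" "finite Q"
  shows "CE (sg m e) P Q = (if ks m \<subseteq> P \<union> Q \<and> mon_divides (ml_mon P + ml_mon Q) m
     then sg (m - (ml_mon P + ml_mon Q)) e else 0)"
proof (rule poly_mapping_eqI)
  fix n
  let ?c = "ml_mon P + ml_mon Q"
  have kc: "ks ?c = P \<union> Q" using assms by (simp add: ks_add_nat ks_ml_mon)
  show "lk (CE (sg m e) P Q) n = lk (if ks m \<subseteq> P \<union> Q \<and> mon_divides ?c m then sg (m - ?c) e else 0) n"
  proof (cases "m = ?c + n")
    case True
    then have "mon_divides ?c m" "m - ?c = n" using add_eq_iff_div by metis+
    moreover have "ks m = P \<union> Q \<union> ks n" using True kc by (simp add: ks_add_nat)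
    ultimately show ?thesis using True by (auto simp: lk_CE lk_single)
  next
    case False
    then have "\<not> (mon_divides ?c m \<and> m - ?c = n)" using add_eq_iff_div by metis
    then show ?thesis using False by (auto simp: lk_CE lk_single)
  qed
qed

lemma div_split:
  assumes "ks \<alpha> \<subseteq> Y" "ks \<beta> \<subseteq> Z" "P \<subseteq> Y" "Q \<subseteq> Z" "Y \<inter> Z = {}" "finite P" "finite Q"
  shows "mon_divides (ml_mon P + ml_mon Q) (\<alpha> + \<beta>) \<longleftrightarrow> mon_divides (ml_mon P) \<alpha> \<and> mon_divides (ml_mon Q) \<beta>"
proof -
  have "(lk (ml_mon P) v + lk (ml_mon Q) v \<le> lk \<alpha> v + lk \<beta> v) \<longleftrightarrow>
        (lk (ml_mon P) v \<le> lk \<alpha> v \<and> lk (ml_mon Q) v \<le> lk \<beta> v)" for v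
  proof -
    have a: "lk \<alpha> v \<noteq> 0 \<Longrightarrow> v \<in> Y" and b: "lk \<beta> v \<noteq> 0 \<Longrightarrow> v \<in> Z"
      using assms(1,2) by (auto simp: in_keys_iff)
    show ?thesis using a b assms(3-7) by (auto simp: lk_ml_mon)
  qed
  then show ?thesis by (auto simp: mon_divides_def Poly_Mapping.lookup_add)
qed

lemma CE_prod:
  fixes a b :: "('v,'a::comm_ring_1) mpoly"
  assumes "vars a \<subseteq> Y" "vars b \<subseteq> Z" "P \<subseteq> Y" "Q \<subseteq> Z" "Y \<inter> Z = {}" "finite P" "finite Q"
  shows "CE (a * b) P Q = CE a P {} * CE b {} Q"
proof (rule bilin[OF addh_CE addh_CE addh_CE])
  fix \<alpha> \<beta> assume ab: "\<alpha> \<in> ks a" "\<beta> \<in> ks b"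
  have kY: "ks \<alpha> \<subseteq> Y" and kZ: "ks \<beta> \<subseteq> Z" using ab assms(1,2) by (auto simp: vars_def)
  let ?ca = "lk a \<alpha>" and ?cb = "lk b \<beta>"
  let ?p = "ml_mon P" and ?q = "ml_mon Q"
  have ds: "mon_divides (?p + ?q) (\<alpha> + \<beta>) \<longleftrightarrow> mon_divides ?p \<alpha> \<and> mon_divides ?q \<beta>"
    by (rule div_split[OF kY kZ assms(3-7)])
  have kk: "ks (\<alpha> + \<beta>) \<subseteq> P \<union> Q \<longleftrightarrow> ks \<alpha> \<subseteq> P \<and> ks \<beta> \<subseteq> Q"
  proof -
    have A: "ks \<alpha> \<inter> Q = {}" using kY assms(4,5) by blast
    have B: "ks \<beta> \<inter> P = {}" using kZ assms(3,5) by blast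
    show ?thesis unfolding ks_add_nat using A B by blast
  qed
  have sub: "mon_divides ?p \<alpha> \<Longrightarrow> mon_divides ?q \<beta> \<Longrightarrow> (\<alpha> + \<beta>) - (?p + ?q) = (\<alpha> - ?p) + (\<beta> - ?q)"
    by (rule poly_mapping_eqI) (simp add: mon_divides_def Poly_Mapping.lookup_add Poly_Mapping.lookup_minus)
  show "CE (sg \<alpha> ?ca * sg \<beta> ?cb) P Q = CE (sg \<alpha> ?ca) P {} * CE (sg \<beta> ?cb) {} Q"
    using assms(6,7) ds kk sub
    by (simp add: Poly_Mapping.mult_single CE_single)
qed

definition mon :: "('v \<Rightarrow> 'a::comm_ring_1) \<Rightarrow> ('v \<Rightarrow>\<^sub>0 nat) \<Rightarrow> 'a" where
  "mon S n = (\<Prod>v\<in>ks n. S v ^ lk n v)"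

lemma mon_sup: "finite K \<Longrightarrow> ks n \<subseteq> K \<Longrightarrow> mon S n = (\<Prod>v\<in>K. S v ^ lk n v)"
  unfolding mon_def by (intro prod.mono_neutral_left) (auto simp: in_keys_iff)

lemma mon_add: "mon S (a + b) = mon S a * mon S b"
proof -
  let ?K = "ks a \<union> ks b"
  have f: "finite ?K" by simp
  have "ks (a + b) \<subseteq> ?K" by (rule Poly_Mapping.keys_add)
  then show ?thesis
    using mon_sup[OF f, of a S] mon_sup[OF f, of b S] mon_sup[OF f, of "a+b" S]
    by (simp add: Poly_Mapping.lookup_add power_add prod.distrib)
qed

lemma eval_sup: "finite K \<Longrightarrow> ks G \<subseteq> K \<Longrightarrow> eval_poly S G = (\<Sum>n\<in>K. lk G n * mon S n)"
  unfolding eval_poly_def mon_def by (intro sum.mono_neutral_left) (auto simp: in_keys_iff)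

lemma addh_eval: "addh (eval_poly S)"
proof -
  have "eval_poly S (p + q) = eval_poly S p + eval_poly S q" for p q
  proof -
    let ?K = "ks p \<union> ks q"
    have f: "finite ?K" by simp
    have "ks (p + q) \<subseteq> ?K" by (rule Poly_Mapping.keys_add)
    then show ?thesis
      using eval_sup[OF f, of p S] eval_sup[OF f, of q S] eval_sup[OF f, of "p+q" S]
      by (simp add: Poly_Mapping.lookup_add distrib_right sum.distrib)
  qed
  then show ?thesis by (simp add: addh_def eval_poly_def)
qed

lemma eval_single: "eval_poly S (sg a e) = e * mon S a"
  by (simp add: eval_poly_def mon_def)

lemma eval_mult: "eval_poly S (p * q) = eval_poly S p * (eval_poly S q :: 'a::field)"
  by (rule bilin[OF addh_eval addh_eval addh_eval])
     (simp add: Poly_Mapping.mult_single eval_single mon_add)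



lemma fun_sum_apply: "(sum f A) x = (\<Sum>a\<in>A. f a x)"
  by (induction A rule: infinite_finite_induct) auto

lemma Hd_zero: "Hd d (0::('v,'a::comm_monoid_add) mpoly) = 0"
  by (rule poly_mapping_eqI) (simp add: lk_Hd)

lemma map_eq_pairs: "(\<And>a b. (a,b) \<in> set ps \<Longrightarrow> f a b = g' a b) \<Longrightarrow>
  map (\<lambda>(a,b). f a b) ps = map (\<lambda>(a,b). g' a b) ps"
  by (induction ps) auto

lemma main_decomp:
  fixes \<Phi> :: "('x,'a::field) mpoly list list" and A :: "'x \<Rightarrow> 'v"
  assumes "\<forall>P\<in>set \<Phi>. \<forall>l\<in>set P. hom_linear_form X l" "\<forall>x\<in>X. A x \<in> Y \<union> Z"
  shows "\<exists>ps. length ps \<le> length \<Phi> * 2^d \<and> (\<forall>(a,b)\<in>set ps. vars a \<subseteq> Y \<and> vars b \<subseteq> Z)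
     \<and> Hd d (circuit_poly (circuit_subst A \<Phi>)) = sum_list (map (\<lambda>(a,b). a*b) ps)"
  using assms(1)
proof (induction \<Phi>)
  case Nil
  show ?case by (rule exI[of _ "[]"]) (simp add: circuit_poly_def circuit_subst_def Hd_zero)
next
  case (Cons P \<Phi>)
  then obtain ps where ps: "length ps \<le> length \<Phi> * 2^d" "\<forall>(a,b)\<in>set ps. vars a \<subseteq> Y \<and> vars b \<subseteq> Z"
    "Hd d (circuit_poly (circuit_subst A \<Phi>)) = sum_list (map (\<lambda>(a,b). a*b) ps)" by auto
  have cp: "circuit_poly (circuit_subst A (P#\<Phi>)) = prod_list (map (rename_poly A) P) + circuit_poly (circuit_subst A \<Phi>)"
    by (simp add: circuit_poly_def circuit_subst_def)
  have Hadd: "Hd d (circuit_poly (circuit_subst A (P#\<Phi>))) = Hd d (prod_list (map (rename_poly A) P)) + Hd d (circuit_poly (circuit_subst A \<Phi>))"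
    unfolding cp by (rule poly_mapping_eqI) (simp add: lk_Hd Poly_Mapping.lookup_add)
  have lin: "\<forall>l\<in>set P. hom_linear_form X l" using Cons.prems by simp
  have h1: "\<forall>l\<in>set (map (rename_poly A) P). homogeneous 1 l"
  proof
    fix l assume "l \<in> set (map (rename_poly A) P)"
    then obtain l0 where "l0 \<in> set P" "l = rename_poly A l0" by auto
    then show "homogeneous 1 l" using lin hom_rename unfolding hom_linear_form_def by blast
  qed
  then have hp: "homogeneous (length P) (prod_list (map (rename_poly A) P))"
    using hom_prod_list by fastforce
  show ?case
  proof (cases "length P = d")
    case True
    have "\<forall>l\<in>set (map (rename_poly A) P). \<exists>lY lZ. l = lY + lZ \<and> vars lY \<subseteq> Y \<and> vars lZ \<subseteq> Z"
    proof
      fix l assume "l \<in> set (map (rename_poly A) P)"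
      then obtain l0 where l0: "l0 \<in> set P" "l = rename_poly A l0" by auto
      have "ks l \<subseteq> {sg v 1 | v. v \<in> Y \<union> Z}"
        using lin_rename_keys[of X l0 A "Y \<union> Z"] lin l0 assms(2) by blast
      then show "\<exists>lY lZ. l = lY + lZ \<and> vars lY \<subseteq> Y \<and> vars lZ \<subseteq> Z" by (rule split_YZ)
    qed
    then obtain qs where qs: "length qs = 2 ^ length (map (rename_poly A) P)"
      "\<forall>(a,b)\<in>set qs. vars a \<subseteq> Y \<and> vars b \<subseteq> Z"
      "prod_list (map (rename_poly A) P) = sum_list (map (\<lambda>(a,b). a*b) qs)"
      using expand_prod by blast
    have "Hd d (prod_list (map (rename_poly A) P)) = prod_list (map (rename_poly A) P)"
      using hp True Hd_hom by blast
    then have "Hd d (circuit_poly (circuit_subst A (P#\<Phi>))) = sum_list (map (\<lambda>(a,b). a*b) (qs @ ps))"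
      using Hadd qs(3) ps(3) by simp
    moreover have "length (qs @ ps) \<le> length (P#\<Phi>) * 2^d" using qs(1) ps(1) True by simp
    moreover have "\<forall>(a,b)\<in>set (qs @ ps). vars a \<subseteq> Y \<and> vars b \<subseteq> Z" using qs(2) ps(2) by auto
    ultimately show ?thesis by blast
  next
    case False
    have "Hd d (prod_list (map (rename_poly A) P)) = 0"
      using hp False Hd_other by blast
    then have "Hd d (circuit_poly (circuit_subst A (P#\<Phi>))) = sum_list (map (\<lambda>(a,b). a*b) ps)"
      using Hadd ps(3) by simp
    moreover have "length ps \<le> length (P#\<Phi>) * 2^d" using ps(1) by simp
    ultimately show ?thesis using ps(2) by blast
  qed
qed

theorem lemma1:
  fixes X :: "'x set" and Y Z :: "'v set"
    and \<Phi> :: "('x,'a::field) mpoly list list" and f :: "('x,'a) mpoly"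
    and k d :: nat and A :: "'x \<Rightarrow> 'v"
  assumes "homogeneous_SPS X \<Phi>"
    and "length \<Phi> = k"
    and "circuit_poly \<Phi> = f"
    and "homogeneous d f"
    and "Y \<inter> Z = {}"
    and "\<forall>x\<in>X. A x \<in> Y \<union> Z"
  shows "maxrank Y Z (circuit_poly (circuit_subst A \<Phi>)) \<le> k * 2 ^ d"
proof -
  define g where "g = circuit_poly (circuit_subst A \<Phi>)"
  have "g = rename_poly A f" unfolding g_def using assms(3) circuit_rename by blast
  then have "homogeneous d g" using hom_rename assms(4) by blast
  then have gH: "Hd d g = g" by (rule Hd_hom)
  obtain ps where ps: "length ps \<le> k * 2^d" "\<forall>(a,b)\<in>set ps. vars a \<subseteq> Y \<and> vars b \<subseteq> Z"
     "g = sum_list (map (\<lambda>(a,b). a*b) ps)"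
    using main_decomp[of \<Phi> X A Y Z d] assms(1,2,6) gH unfolding g_def homogeneous_SPS_def by auto
  interpret vs: vector_space "\<lambda>c (f::'v set \<Rightarrow> 'a) x. c * f x"
    by unfold_locales (auto simp: fun_eq_iff algebra_simps)
  have "rank_eval Y Z g S \<le> k * 2 ^ d" for S
  proof -
    define w where "w j = (\<lambda>Q. if finite Q \<and> Q \<subseteq> Z then eval_poly S (CE (snd (ps!j)) {} Q) else 0)" for j
    define \<alpha> where "\<alpha> j P = eval_poly S (CE (fst (ps!j)) P {})" for j P
    have row: "eval_row Z g S P = (\<Sum>j<length ps. (\<lambda>Q. \<alpha> j P * w j Q))" if P: "finite P" "P \<subseteq> Y" for P
    proof (rule ext)
      fix Q
      show "eval_row Z g S P Q = (\<Sum>j<length ps. (\<lambda>Q. \<alpha> j P * w j Q)) Q"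
      proof (cases "finite Q \<and> Q \<subseteq> Z")
        case True
        have cab: "CE (a*b) P Q = CE a P {} * CE b {} Q" if "(a,b) \<in> set ps" for a b
        proof -
          have "vars a \<subseteq> Y" "vars b \<subseteq> Z" using ps(2) that by auto
          then show ?thesis using CE_prod[of a Y b Z P Q] assms(5) P True by blast
        qed
        have m1: "map (\<lambda>g. CE g P Q) (map (\<lambda>(a,b). a*b) ps) = map (\<lambda>(a,b). CE (a*b) P Q) ps"
          by (induction ps) auto
        have m2: "map (\<lambda>(a,b). CE (a*b) P Q) ps = map (\<lambda>(a,b). CE a P {} * CE b {} Q) ps"
          by (rule map_eq_pairs) (rule cab)
        have "CE g P Q = sum_list (map (\<lambda>(a,b). CE a P {} * CE b {} Q) ps)"
          by (simp only: ps(3) addh_sum_list[OF addh_CE] m1 m2)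
        then have "eval_poly S (CE g P Q) = sum_list (map (\<lambda>(a,b). eval_poly S (CE a P {}) * eval_poly S (CE b {} Q)) ps)"
          using addh_sum_list[OF addh_eval, of S] by (simp add: o_def case_prod_unfold eval_mult)
        also have "\<dots> = (\<Sum>j<length ps. \<alpha> j P * w j Q)"
          by (simp add: sum_list_sum_nth atLeast0LessThan \<alpha>_def w_def True case_prod_unfold)
        finally show ?thesis
          using True P by (simp add: eval_row_def coeff_entry_CE fun_sum_apply)
      next
        case False
        then have c: "(finite Q \<and> Q \<subseteq> Z) = False" by simp
        show ?thesis
          by (simp only: eval_row_def fun_sum_apply w_def c if_False mult_zero_right sum.neutral_const)
      qed
    qed
    have "eval_row Z g S ` {P. finite P \<and> P \<subseteq> Y} \<subseteq> vs.span (w ` {..<length ps})"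
    proof
      fix r assume "r \<in> eval_row Z g S ` {P. finite P \<and> P \<subseteq> Y}"
      then obtain P where P: "finite P" "P \<subseteq> Y" "r = eval_row Z g S P" by auto
      have "(\<Sum>j<length ps. (\<lambda>Q. \<alpha> j P * w j Q)) \<in> vs.span (w ` {..<length ps})"
      proof (rule vs.span_sum)
        fix j assume "j \<in> {..<length ps}"
        then have "w j \<in> vs.span (w ` {..<length ps})" by (intro vs.span_base) auto
        then show "(\<lambda>Q. \<alpha> j P * w j Q) \<in> vs.span (w ` {..<length ps})"
          using vs.span_scale[of "w j" _ "\<alpha> j P"] by simp
      qed
      then show "r \<in> vs.span (w ` {..<length ps})" using row P by simp
    qed
    then have "vs.dim (eval_row Z g S ` {P. finite P \<and> P \<subseteq> Y}) \<le> card (w ` {..<length ps})"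
      by (rule vs.dim_le_card) simp
    also have "\<dots> \<le> length ps" using card_image_le[of "{..<length ps}" w] by simp
    finally show ?thesis unfolding rank_eval_def using ps(1) by simp
  qed
  then show ?thesis unfolding maxrank_def g_def[symmetric]
    by (intro cSUP_least) auto
qed


end
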